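(* Let $(R,\mathfrak{m})$ be an Artinian local ring with $|R/\mathfrak{m}|=q<\infty$ such that $R$ has only finitely many ideals. Then $|\mathfrak{m}^i|\le q^{|\mathbb{I}(\mathfrak{m}^i)|}$ for every $i\ge 1$, and $|R|\le q^{|\mathbb{I}(R)|}$.
   Context: All rings are commutative with $1\neq 0$. For an ideal $J$ of $R$, $\mathbb{I}(J)$ denotes the set of all ideals $I$ of $R$ with $I\subseteq J$. *)

theory Defs
  imports "HOL-Algebra.Ideal_Product" "HOL-Algebra.QuotRing"
begin

definition artinian_ring :: "('a, 'b) ring_scheme \<Rightarrow> bool" where
  "artinian_ring R \<longleftrightarrow> ring R \<and>
     (\<forall>I :: nat \<Rightarrow> 'a set. (\<forall>n. ideal (I n) R) \<and> (\<forall>n. I (Suc n) \<subseteq> I n)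
        \<longrightarrow> (\<exists>N. \<forall>n\<ge>N. I n = I N))"

definition local_ring_with :: "('a, 'b) ring_scheme \<Rightarrow> 'a set \<Rightarrow> bool" where
  "local_ring_with R m \<longleftrightarrow> cring R \<and> maximalideal m R \<and>
     (\<forall>J. maximalideal J R \<longrightarrow> J = m)"

definition ideals_below :: "('a, 'b) ring_scheme \<Rightarrow> 'a set \<Rightarrow> 'a set set" where
  "ideals_below R J = {I. ideal I R \<and> I \<subseteq> J}"

text \<open>Power of an ideal, via the product of ideals (I^0 = R).\<close>
definition ideal_pow :: "('a, 'b) ring_scheme \<Rightarrow> 'a set \<Rightarrow> nat \<Rightarrow> 'a set" where
  "ideal_pow R I n = I [^]\<^bsub>ideals_set R\<^esub> n"

end

theory Submission
  imports Defs
begin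

context cring
begin

lemma exists_max_ideal_above:
  assumes fin: "finite {I. ideal I R}" and K: "ideal K R" and Kne: "K \<noteq> carrier R"
  shows "\<exists>M. maximalideal M R \<and> K \<subseteq> M"
proof -
  let ?S = "{J. ideal J R \<and> K \<subseteq> J \<and> J \<noteq> carrier R}"
  have f: "finite ?S" by (rule finite_subset[OF _ fin]) auto
  have ne: "?S \<noteq> {}" using K Kne by auto
  from finite_has_maximal[OF f ne] obtain M where M: "M \<in> ?S" and Mmax: "\<forall>b\<in>?S. M \<le> b \<longrightarrow> M = b" ..
  have "maximalideal M R"
  proof (rule maximalidealI)
    show "ideal M R" using M by auto
    show "carrier R \<noteq> M" using M by auto
    fix J assume "ideal J R" "M \<subseteq> J" "J \<subseteq> carrier R"
    then show "J = M \<or> J = carrier R" using Mmax M by blast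
  qed
  then show ?thesis using M by auto
qed

lemma set_add_mem:
  "y \<in> J <+>\<^bsub>R\<^esub> PIdl x \<longleftrightarrow> (\<exists>j\<in>J. \<exists>r\<in>carrier R. y = j \<oplus> r \<otimes> x)"
  unfolding set_add_def set_mult_def cgenideal_def by auto

lemma set_add_memI:
  "j \<in> J \<Longrightarrow> r \<in> carrier R \<Longrightarrow> j \<oplus> r \<otimes> x \<in> J <+>\<^bsub>R\<^esub> PIdl x"
  unfolding set_add_mem by blast

lemma main_count:
  assumes maxm: "maximalideal m R" and loc: "\<forall>J. maximalideal J R \<longrightarrow> J = m"
    and finQ: "finite (carrier (R Quot m))" and q: "card (carrier (R Quot m)) = q"
    and fin: "finite {I. ideal I R}"
  shows "ideal I R \<Longrightarrow> finite I \<and> card I \<le> q ^ card (ideals_below R I)"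
proof (induction "card (ideals_below R I)" arbitrary: I rule: less_induct)
  case less
  have msub: "m \<subseteq> carrier R" using maxm by (simp add: ideal.axioms(1) additive_subgroup.a_subset maximalideal.axioms(1))
  have "m +> \<zero> \<in> carrier (R Quot m)" using a_rcosetsI[OF msub] by (simp add: FactRing_def)
  hence "carrier (R Quot m) \<noteq> {}" by auto
  hence "card (carrier (R Quot m)) > 0" using finQ by (simp add: card_gt_0_iff)
  hence q1: "q \<ge> 1" using q by simp
  have finIB: "\<And>I. finite (ideals_below R I)"
    by (rule finite_subset[OF _ fin]) (auto simp: ideals_below_def)
  show ?case
  proof (cases "I = {\<zero>}")
    case True
    then show ?thesis using one_le_power[OF q1, of "card (ideals_below R I)"] by simp
  next
    case False
    have zI: "\<zero> \<in> I" using less.prems by (simp add: additive_subgroup.zero_closed ideal.axioms(1))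
    have Icarr: "I \<subseteq> carrier R" using less.prems by (simp add: additive_subgroup.a_subset ideal.axioms(1))
    let ?S = "{J. ideal J R \<and> J \<subset> I}"
    have f: "finite ?S" by (rule finite_subset[OF _ fin]) auto
    have "{\<zero>} \<in> ?S" using zeroideal zI False by auto
    hence ne: "?S \<noteq> {}" by blast
    from finite_has_maximal[OF f ne] obtain J where J: "J \<in> ?S" and Jmax: "\<forall>b\<in>?S. J \<le> b \<longrightarrow> J = b" ..
    have idJ: "ideal J R" and JI: "J \<subset> I" using J by auto
    have Jcarr: "J \<subseteq> carrier R" using idJ by (simp add: additive_subgroup.a_subset ideal.axioms(1))
    obtain x where xI: "x \<in> I" and xJ: "x \<notin> J" using JI by auto
    have xc: "x \<in> carrier R" using xI Icarr by auto
    have zJ: "\<zero> \<in> J" using idJ by (simp add: additive_subgroup.zero_closed ideal.axioms(1))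
    have Lgen: "J <+>\<^bsub>R\<^esub> PIdl z = I" if zI: "z \<in> I" and zJ': "z \<notin> J" for z
    proof -
      have zc: "z \<in> carrier R" using zI Icarr by auto
      let ?L = "J <+>\<^bsub>R\<^esub> PIdl z"
      have idL: "ideal ?L R" using add_ideals[OF idJ cgenideal_ideal[OF zc]] .
      have JL: "J \<subseteq> ?L"
      proof
        fix j assume jJ: "j \<in> J"
        have eq: "j = j \<oplus> \<zero> \<otimes> z" using jJ Jcarr zc by auto
        have "j \<oplus> \<zero> \<otimes> z \<in> ?L" by (rule set_add_memI[OF jJ zero_closed])
        then show "j \<in> ?L" using eq by simp
      qed
      have eqx: "z = \<zero> \<oplus> \<one> \<otimes> z" using zc by simp
      have "\<zero> \<oplus> \<one> \<otimes> z \<in> ?L" by (rule set_add_memI[OF zJ one_closed])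
      then have zL: "z \<in> ?L" using eqx by simp
      have LI: "?L \<subseteq> I"
      proof
        fix y assume "y \<in> ?L"
        then obtain j r where j: "j \<in> J" and r: "r \<in> carrier R" and y: "y = j \<oplus> r \<otimes> z"
          unfolding set_add_mem by (elim bexE) blast
        have jI: "j \<in> I" using j JI by auto
        have rI: "r \<otimes> z \<in> I" using ideal.I_l_closed[OF less.prems zI r] .
        show "y \<in> I" unfolding y by (rule additive_subgroup.a_closed[OF ideal.axioms(1)[OF less.prems] jI rI])
      qed
      show "?L = I"
      proof (rule ccontr)
        assume "?L \<noteq> I"
        hence "?L \<in> ?S" using idL LI by auto
        hence "J = ?L" using Jmax JL by auto
        thus False using zL zJ' by auto
      qed
    qed
    have LeqI: "J <+>\<^bsub>R\<^esub> PIdl x = I" by (rule Lgen[OF xI xJ])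
    let ?K = "{r \<in> carrier R. r \<otimes> x \<in> J}"
    have idK: "ideal ?K R"
    proof (rule idealI[OF ring_axioms])
      show "subgroup ?K (add_monoid R)"
      proof (rule add.subgroupI)
        show "?K \<subseteq> carrier R" by auto
        have "\<zero> \<in> ?K" using xc zJ by simp
        thus "?K \<noteq> {}" by blast
      next
        fix a assume "a \<in> ?K"
        then show "\<ominus> a \<in> ?K" using xc
          by (auto simp: l_minus intro: additive_subgroup.a_inv_closed[OF ideal.axioms(1)[OF idJ]])
      next
        fix a b assume "a \<in> ?K" "b \<in> ?K"
        then show "a \<oplus> b \<in> ?K" using xc
          by (auto simp: l_distr intro: additive_subgroup.a_closed[OF ideal.axioms(1)[OF idJ]])
      qed
    next
      fix a y assume "a \<in> ?K" "y \<in> carrier R"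
      then show "y \<otimes> a \<in> ?K" using xc
        by (auto simp: m_assoc intro: ideal.I_l_closed[OF idJ])
    next
      fix a y assume "a \<in> ?K" "y \<in> carrier R"
      hence ac: "a \<in> carrier R" and ax: "a \<otimes> x \<in> J" and yc: "y \<in> carrier R" by auto
      have "(a \<otimes> y) \<otimes> x = y \<otimes> (a \<otimes> x)" using ac yc xc by (simp add: m_ac)
      moreover have "y \<otimes> (a \<otimes> x) \<in> J" by (rule ideal.I_l_closed[OF idJ ax yc])
      ultimately show "a \<otimes> y \<in> ?K" using ac yc by simp
    qed
    have "\<one> \<notin> ?K" using xJ xc by auto
    hence "?K \<noteq> carrier R" by auto
    then obtain M where "maximalideal M R" "?K \<subseteq> M"
      using exists_max_ideal_above[OF fin idK] by blast
    hence Km: "?K \<subseteq> m" using loc by auto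
    define T where "T = (\<lambda>C. SOME r. r \<in> C) ` carrier (R Quot m)"
    have finT: "finite T" and cardT: "card T \<le> q" unfolding T_def using finQ q card_image_le by auto
    have Isub: "I \<subseteq> (\<lambda>(j,t). j \<oplus> t \<otimes> x) ` (J \<times> T)"
    proof
      fix y assume "y \<in> I"
      hence "y \<in> J <+>\<^bsub>R\<^esub> PIdl x" using LeqI by simp
      then obtain j r where j: "j \<in> J" and r: "r \<in> carrier R" and y: "y = j \<oplus> r \<otimes> x"
        unfolding set_add_mem by (elim bexE) blast
      let ?C = "m +> r"
      have C: "?C \<in> carrier (R Quot m)" using a_rcosetsI[OF msub r] by (simp add: FactRing_def)
      have "r \<in> ?C" unfolding a_r_coset_def'
        using r additive_subgroup.zero_closed[OF ideal.axioms(1)[OF maximalideal.axioms(1)[OF maxm]]]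
        by (intro UN_I[of \<zero>]) auto
      hence tC: "(SOME t. t \<in> ?C) \<in> ?C" by (rule someI)
      define t where "t = (SOME t. t \<in> ?C)"
      have tT: "t \<in> T" unfolding T_def t_def using C by auto
      obtain h where h: "h \<in> m" and th: "t = h \<oplus> r" using tC unfolding t_def a_r_coset_def' by auto
      have hc: "h \<in> carrier R" using h msub by auto
      have hK: "h \<otimes> x \<in> J"
      proof (rule ccontr)
        assume nJ: "h \<otimes> x \<notin> J"
        have hm: "h \<in> m" by (rule h)
        have hxI: "h \<otimes> x \<in> I" using ideal.I_l_closed[OF less.prems xI hc] .
        have "x \<in> J <+>\<^bsub>R\<^esub> PIdl (h \<otimes> x)" using Lgen[OF hxI nJ] xI by simp
        then obtain j0 s0 where j0: "j0 \<in> J" and s0: "s0 \<in> carrier R" and xe: "x = j0 \<oplus> s0 \<otimes> (h \<otimes> x)"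
          unfolding set_add_mem by (elim bexE) blast
        have j0c: "j0 \<in> carrier R" using j0 Jcarr by auto
        have "(\<one> \<ominus> s0 \<otimes> h) \<otimes> x = x \<ominus> s0 \<otimes> (h \<otimes> x)" using s0 hc xc by algebra
        also have "\<dots> = j0" by (subst (1) xe) (use j0c s0 hc xc in algebra)
        finally have "(\<one> \<ominus> s0 \<otimes> h) \<in> ?K" using j0 s0 hc by simp
        hence u: "\<one> \<ominus> s0 \<otimes> h \<in> m" using Km by auto
        have sh: "s0 \<otimes> h \<in> m" using ideal.I_l_closed[OF maximalideal.axioms(1)[OF maxm] hm s0] .
        have "(\<one> \<ominus> s0 \<otimes> h) \<oplus> s0 \<otimes> h \<in> m"
          by (rule additive_subgroup.a_closed[OF ideal.axioms(1)[OF maximalideal.axioms(1)[OF maxm]] u sh])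
        moreover have "(\<one> \<ominus> s0 \<otimes> h) \<oplus> s0 \<otimes> h = \<one>" using s0 hc by algebra
        ultimately have "\<one> \<in> m" by simp
        hence "m = carrier R" by (rule ideal.one_imp_carrier[OF maximalideal.axioms(1)[OF maxm]])
        thus False using maximalideal.I_notcarr[OF maxm] by simp
      qed
      define j' where "j' = j \<ominus> h \<otimes> x"
      have jc: "j \<in> carrier R" using j Jcarr by auto
      have j'J: "j' \<in> J" unfolding j'_def minus_eq
        by (rule additive_subgroup.a_closed[OF ideal.axioms(1)[OF idJ] j
              additive_subgroup.a_inv_closed[OF ideal.axioms(1)[OF idJ] hK]])
      have "y = j' \<oplus> t \<otimes> x" unfolding y j'_def th using jc hc r xc by algebra
      then show "y \<in> (\<lambda>(j,t). j \<oplus> t \<otimes> x) ` (J \<times> T)"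
        using j'J tT by (intro image_eqI[where x="(j', t)"]) auto
    qed
    have sub: "ideals_below R J \<subset> ideals_below R I"
    proof
      show "ideals_below R J \<subseteq> ideals_below R I" using JI by (auto simp: ideals_below_def)
      have "I \<in> ideals_below R I" using less.prems by (simp add: ideals_below_def)
      moreover have "I \<notin> ideals_below R J" using JI by (auto simp: ideals_below_def)
      ultimately show "ideals_below R J \<noteq> ideals_below R I" by blast
    qed
    have lt: "card (ideals_below R J) < card (ideals_below R I)"
      by (rule psubset_card_mono[OF finIB sub])
    from less.hyps[OF _ idJ] lt have finJ: "finite J" and cJ: "card J \<le> q ^ card (ideals_below R J)" by auto
    have finIm: "finite ((\<lambda>(j,t). j \<oplus> t \<otimes> x) ` (J \<times> T))" using finJ finT by simp
    have finI: "finite I" by (rule finite_subset[OF Isub finIm])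
    have "card I \<le> card ((\<lambda>(j,t). j \<oplus> t \<otimes> x) ` (J \<times> T))" by (rule card_mono[OF finIm Isub])
    also have "\<dots> \<le> card (J \<times> T)" by (rule card_image_le) (use finJ finT in simp)
    also have "\<dots> = card J * card T" by (rule card_cartesian_product)
    also have "\<dots> \<le> q ^ card (ideals_below R J) * q" using cJ cardT by (intro mult_mono) auto
    also have "\<dots> = q ^ Suc (card (ideals_below R J))" by simp
    also have "\<dots> \<le> q ^ card (ideals_below R I)" using q1 lt by (intro power_increasing) auto
    finally show ?thesis using finI by simp
  qed
qed

end

theorem lemma2p9:
  fixes R (structure) and m :: "'a set" and q :: nat
  assumes "cring R" and "\<one>\<^bsub>R\<^esub> \<noteq> \<zero>\<^bsub>R\<^esub>"
    and "artinian_ring R"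
    and "local_ring_with R m"
    and "finite (carrier (R Quot m))" and "card (carrier (R Quot m)) = q"
    and "finite {I. ideal I R}"
  shows "(\<forall>i::nat. i \<ge> 1 \<longrightarrow> finite (ideal_pow R m i) \<and>
            card (ideal_pow R m i) \<le> q ^ card (ideals_below R (ideal_pow R m i)))
         \<and> finite (carrier R) \<and> card (carrier R) \<le> q ^ card (ideals_below R (carrier R))"
proof -
  interpret cring R by fact
  have maxm: "maximalideal m R" and loc: "\<forall>J. maximalideal J R \<longrightarrow> J = m"
    using assms(4) by (auto simp: local_ring_with_def)
  note mc = main_count[OF maxm loc assms(5) assms(6) assms(7)]
  have "ideal (ideal_pow R m i) R" for i
  proof -
    have mon: "monoid (ideals_set R)" using ideals_set_is_comm_monoid comm_monoid.axioms(1) by blast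
    have "m \<in> carrier (ideals_set R)" using maximalideal.axioms(1)[OF maxm] by (simp add: ideals_set_def)
    hence "m [^]\<^bsub>ideals_set R\<^esub> i \<in> carrier (ideals_set R)" by (rule monoid.nat_pow_closed[OF mon])
    thus ?thesis by (simp add: ideals_set_def ideal_pow_def)
  qed
  hence A: "\<forall>i::nat. i \<ge> 1 \<longrightarrow> finite (ideal_pow R m i) \<and>
            card (ideal_pow R m i) \<le> q ^ card (ideals_below R (ideal_pow R m i))"
    using mc by blast
  show ?thesis using A mc[OF oneideal] by blast
qed

end
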